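(* Let $a_0,\dots,a_4,b_0,\dots,b_4>0$. Assume $Q<0$, $z_0>0$ (so that $\xi^{ext}_1,\dots,\xi^{ext}_4$ are real) and $\xi_{min}>0$. If $P_5(\xi_{min})>0$ and $P_5(\xi_{max})<0$, then the quartic operator $\mathcal{Q}$ has at least three fixed points in $\mathbb{R}_>^2$, i.e. $N_>^{fix}(\mathcal{Q})\ge 3$.
   Context: Quartic operator on $\mathbb{R}_+^2=\{(x,y):x\ge0,y\ge0\}$: $\mathcal{Q}(x,y)=\big(\sum_{i=0}^4\binom{4}{i}a_i x^{4-i}y^i,\ \sum_{i=0}^4\binom{4}{i}b_i x^{4-i}y^i\big)$; $\mathbb{R}_>^2=\{(x,y):x>0,y>0\}$; $N_>^{fix}(\mathcal{Q})$ is the number of fixed points of $\mathcal{Q}$ in $\mathbb{R}_>^2$. Set $\mu_0=a_4$, $\mu_1=4a_3-b_4$, $\mu_2=6a_2-4b_3$, $\mu_3=4a_1-6b_2$, $\mu_4=a_0-4b_1$, $\mu_5=b_0$, and $P_5(\xi)=\mu_0\xi^5+\mu_1\xi^4+\mu_2\xi^3+\mu_3\xi^2+\mu_4\xi-\mu_5$. Define $p=\frac{15\mu_0\mu_2-6\mu_1^2}{25\mu_0^2}$, $q=\frac{50\mu_0^2\mu_3+8\mu_1^3-30\mu_0\mu_1\mu_2}{125\mu_0^3}$, $r=\frac{15\mu_0\mu_1^2\mu_2-50\mu_0^2\mu_1\mu_3-3\mu_1^4+125\mu_0^3\mu_4}{625\mu_0^4}$ (so that $\omega^4+p\omega^2+q\omega+r=P_5'(\omega-\frac{\mu_1}{5\mu_0})/(5\mu_0)$),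 $a=-\frac{p^2}{12}-r$, $b=-\frac{p^3}{108}+\frac{pr}{3}-\frac{q^2}{8}$, $Q=(a/3)^3+(b/2)^2$. When $Q<0$ (hence $a<0$), let $\alpha\in[0,\pi]$ with $\cos\alpha=-\frac{b}{2}\left(-\frac{3}{a}\right)^{3/2}$ and $z_0=2\sqrt{-a/3}\,\cos\!\left(\frac{2\pi}{3}+\frac{\alpha}{3}\right)-\frac{p}{3}$. For $z_0>0$ put $\xi^{ext}_{1,2}=\frac12\Big(\sqrt{2z_0}\pm\sqrt{2z_0-4\big(\frac p2+z_0+\frac{q}{2\sqrt{2z_0}}\big)}\Big)-\frac{\mu_1}{5\mu_0}$, $\xi^{ext}_{3,4}=\frac12\Big(-\sqrt{2z_0}\pm\sqrt{2z_0-4\big(\frac p2+z_0-\frac{q}{2\sqrt{2z_0}}\big)}\Big)-\frac{\mu_1}{5\mu_0}$, and $\xi_{min}=\min_j\xi^{ext}_j$, $\xi_{max}=\max_j\xi^{ext}_j$. *)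

theory Defs
  imports Complex_Main "HOL-Library.Extended_Nat"
begin

text \<open>Coefficients a_0..a_4 and b_0..b_4 are given as functions nat => real (only indices 0..4 matter).\<close>

definition quartic_op :: "(nat \<Rightarrow> real) \<Rightarrow> (nat \<Rightarrow> real) \<Rightarrow> real \<times> real \<Rightarrow> real \<times> real" where
  "quartic_op a b = (\<lambda>(x, y).
     ((\<Sum>i\<le>4. real (4 choose i) * a i * x ^ (4 - i) * y ^ i),
      (\<Sum>i\<le>4. real (4 choose i) * b i * x ^ (4 - i) * y ^ i)))"

definition fixed_points_pos :: "(nat \<Rightarrow> real) \<Rightarrow> (nat \<Rightarrow> real) \<Rightarrow> (real \<times> real) set" where
  "fixed_points_pos a b = {(x, y). x > 0 \<and> y > 0 \<and> quartic_op a b (x, y) = (x, y)}"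

definition N_fix_pos :: "(nat \<Rightarrow> real) \<Rightarrow> (nat \<Rightarrow> real) \<Rightarrow> enat" where
  "N_fix_pos a b = (if finite (fixed_points_pos a b) then enat (card (fixed_points_pos a b)) else \<infinity>)"

definition mu :: "(nat \<Rightarrow> real) \<Rightarrow> (nat \<Rightarrow> real) \<Rightarrow> nat \<Rightarrow> real" where
  "mu a b k = (if k = 0 then a 4
     else if k = 1 then 4 * a 3 - b 4
     else if k = 2 then 6 * a 2 - 4 * b 3
     else if k = 3 then 4 * a 1 - 6 * b 2
     else if k = 4 then a 0 - 4 * b 1
     else b 0)"

definition P5 :: "(nat \<Rightarrow> real) \<Rightarrow> (nat \<Rightarrow> real) \<Rightarrow> real \<Rightarrow> real" where
  "P5 a b \<xi> = mu a b 0 * \<xi> ^ 5 + mu a b 1 * \<xi> ^ 4 + mu a b 2 * \<xi> ^ 3 + mu a b 3 * \<xi> ^ 2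
     + mu a b 4 * \<xi> - mu a b 5"

definition pp :: "(nat \<Rightarrow> real) \<Rightarrow> (nat \<Rightarrow> real) \<Rightarrow> real" where
  "pp a b = (let m = mu a b in (15 * m 0 * m 2 - 6 * (m 1)^2) / (25 * (m 0)^2))"

definition qq :: "(nat \<Rightarrow> real) \<Rightarrow> (nat \<Rightarrow> real) \<Rightarrow> real" where
  "qq a b = (let m = mu a b in
     (50 * (m 0)^2 * m 3 + 8 * (m 1)^3 - 30 * m 0 * m 1 * m 2) / (125 * (m 0)^3))"

definition rr :: "(nat \<Rightarrow> real) \<Rightarrow> (nat \<Rightarrow> real) \<Rightarrow> real" where
  "rr a b = (let m = mu a b in
     (15 * m 0 * (m 1)^2 * m 2 - 50 * (m 0)^2 * m 1 * m 3 - 3 * (m 1)^4 + 125 * (m 0)^3 * m 4)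
       / (625 * (m 0)^4))"

definition aa :: "(nat \<Rightarrow> real) \<Rightarrow> (nat \<Rightarrow> real) \<Rightarrow> real" where
  "aa a b = - ((pp a b) ^ 2 / 12) - rr a b"

definition bb :: "(nat \<Rightarrow> real) \<Rightarrow> (nat \<Rightarrow> real) \<Rightarrow> real" where
  "bb a b = - ((pp a b) ^ 3 / 108) + pp a b * rr a b / 3 - (qq a b) ^ 2 / 8"

definition QQ :: "(nat \<Rightarrow> real) \<Rightarrow> (nat \<Rightarrow> real) \<Rightarrow> real" where
  "QQ a b = (aa a b / 3)^3 + (bb a b / 2)^2"

definition alpha :: "(nat \<Rightarrow> real) \<Rightarrow> (nat \<Rightarrow> real) \<Rightarrow> real" where
  "alpha a b = arccos (- (bb a b / 2) * (sqrt (- 3 / aa a b))^3)"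

definition z0 :: "(nat \<Rightarrow> real) \<Rightarrow> (nat \<Rightarrow> real) \<Rightarrow> real" where
  "z0 a b = 2 * sqrt (- aa a b / 3) * cos (2 * pi / 3 + alpha a b / 3) - pp a b / 3"

definition xi_ext :: "(nat \<Rightarrow> real) \<Rightarrow> (nat \<Rightarrow> real) \<Rightarrow> nat \<Rightarrow> real" where
  "xi_ext a b j = (let z = z0 a b; p = pp a b; q = qq a b; s = sqrt (2 * z);
      sh = mu a b 1 / (5 * mu a b 0) in
     if j = 1 then (s + sqrt (2 * z - 4 * (p / 2 + z + q / (2 * s)))) / 2 - sh
     else if j = 2 then (s - sqrt (2 * z - 4 * (p / 2 + z + q / (2 * s)))) / 2 - sh
     else if j = 3 then (- s + sqrt (2 * z - 4 * (p / 2 + z - q / (2 * s)))) / 2 - sh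
     else (- s - sqrt (2 * z - 4 * (p / 2 + z - q / (2 * s)))) / 2 - sh)"

definition xi_min :: "(nat \<Rightarrow> real) \<Rightarrow> (nat \<Rightarrow> real) \<Rightarrow> real" where
  "xi_min a b = Min (xi_ext a b ` {1..4})"

definition xi_max :: "(nat \<Rightarrow> real) \<Rightarrow> (nat \<Rightarrow> real) \<Rightarrow> real" where
  "xi_max a b = Max (xi_ext a b ` {1..4})"

end

theory Submission
  imports Defs
begin

lemma sum4: "(\<Sum>i\<le>4. f i) = f 0 + f 1 + f 2 + f 3 + (f (4::nat) :: real)"
  by (simp add: numeral_eq_Suc add.assoc)

lemma ch4: "(4::nat) choose 0 = 1" "(4::nat) choose 1 = 4" "(4::nat) choose 2 = 6"
  "(4::nat) choose 3 = 4" "(4::nat) choose 4 = 1"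
  by (simp_all add: eval_nat_numeral binomial_Suc_Suc)

lemma fix_from_root:
  fixes a b :: "nat \<Rightarrow> real"
  assumes a: "\<forall>i\<le>4. a i > 0" and r: "P5 a b \<xi> = 0" and xp: "\<xi> > 0"
  shows "\<exists>x. x > 0 \<and> (x, \<xi> * x) \<in> fixed_points_pos a b"
proof -
  define A where "A = a 0 + 4 * a 1 * \<xi> + 6 * a 2 * \<xi>^2 + 4 * a 3 * \<xi>^3 + a 4 * \<xi>^4"
  define B where "B = b 0 + 4 * b 1 * \<xi> + 6 * b 2 * \<xi>^2 + 4 * b 3 * \<xi>^3 + b 4 * \<xi>^4"
  have Ap: "A > 0" using a xp unfolding A_def
    by (intro add_pos_pos mult_pos_pos) auto
  have BA: "B = \<xi> * A" using r unfolding A_def B_def P5_def mu_def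
    by (simp add: algebra_simps power2_eq_square power3_eq_cube power4_eq_xxxx
                  eval_nat_numeral)
  define x where "x = root 3 (1 / A)"
  have xpos: "x > 0" using Ap unfolding x_def by simp
  have x3: "x ^ 3 = 1 / A" using Ap unfolding x_def by (simp add: real_root_pow_pos2)
  have x4A: "x ^ 4 * A = x"
  proof -
    have "x ^ 4 * A = x * (x^3 * A)" by (simp add: eval_nat_numeral)
    also have "\<dots> = x" using x3 Ap by simp
    finally show ?thesis .
  qed
  have c1: "(\<Sum>i\<le>4. real (4 choose i) * a i * x ^ (4 - i) * (\<xi> * x) ^ i) = x ^ 4 * A"
    unfolding sum4 A_def
    by (simp add: algebra_simps power_mult_distrib eval_nat_numeral ch4)
  have c2: "(\<Sum>i\<le>4. real (4 choose i) * b i * x ^ (4 - i) * (\<xi> * x) ^ i) = x ^ 4 * B"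
    unfolding sum4 B_def
    by (simp add: algebra_simps power_mult_distrib eval_nat_numeral ch4)
  have "quartic_op a b (x, \<xi> * x) = (x, \<xi> * x)"
    unfolding quartic_op_def using c1 c2 x4A BA
    by (simp add: algebra_simps)
  then show ?thesis using xpos xp unfolding fixed_points_pos_def by auto
qed

lemma P5_cont: "isCont (P5 a b) x"
  unfolding P5_def by (intro continuous_intros)

lemma P5_large:
  fixes a b :: "nat \<Rightarrow> real"
  assumes m0: "mu a b 0 > 0"
  shows "\<exists>M>c. P5 a b M > 0"
proof -
  define S where "S = \<bar>mu a b 1\<bar> + \<bar>mu a b 2\<bar> + \<bar>mu a b 3\<bar> + \<bar>mu a b 4\<bar> + \<bar>mu a b 5\<bar>"
  define M where "M = \<bar>c\<bar> + 1 + S / mu a b 0"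
  have S0: "S \<ge> 0" unfolding S_def by simp
  have M1: "M \<ge> 1" unfolding M_def using S0 m0 by simp
  have Mc: "M > c" unfolding M_def using S0 m0 divide_nonneg_pos[of S "mu a b 0"] by linarith
  have MS0: "mu a b 0 * M = (\<bar>c\<bar> + 1) * mu a b 0 + S" unfolding M_def using m0
    by (simp add: algebra_simps)
  have "(\<bar>c\<bar> + 1) * mu a b 0 > 0" using m0 by (intro mult_pos_pos) auto
  then have MS: "mu a b 0 * M > S" using MS0 by linarith
  have p4: "M^4 \<ge> 1" using M1 by simp
  have h: "\<bar>m\<bar> * M ^ k \<le> \<bar>m\<bar> * M ^ 4" if "k \<le> 4" for m :: real and k
    by (intro mult_left_mono power_increasing that M1) simp
  have e1: "mu a b 1 * M^4 \<ge> - \<bar>mu a b 1\<bar> * M^4" using mult_right_mono[OF abs_ge_minus_self[of "mu a b 1"], of "M^4"] M1 by simp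
  have e2: "mu a b 2 * M^3 \<ge> - \<bar>mu a b 2\<bar> * M^4" using h[of 3 "mu a b 2"] mult_right_mono[OF abs_ge_minus_self[of "mu a b 2"], of "M^3"] M1 by simp
  have e3: "mu a b 3 * M^2 \<ge> - \<bar>mu a b 3\<bar> * M^4" using h[of 2 "mu a b 3"] mult_right_mono[OF abs_ge_minus_self[of "mu a b 3"], of "M^2"] M1 by simp
  have e4: "mu a b 4 * M \<ge> - \<bar>mu a b 4\<bar> * M^4" using h[of 1 "mu a b 4"] mult_right_mono[OF abs_ge_minus_self[of "mu a b 4"], of "M"] M1 by simp
  have e5: "- mu a b 5 \<ge> - \<bar>mu a b 5\<bar> * M^4" using h[of 0 "mu a b 5"] by simp
  have g1: "P5 a b M \<ge> mu a b 0 * M^5 - S * M^4"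
    unfolding P5_def S_def using e1 e2 e3 e4 e5 by (simp add: algebra_simps)
  have g2: "mu a b 0 * M^5 - S * M^4 = M^4 * (mu a b 0 * M - S)"
    by (simp add: algebra_simps eval_nat_numeral)
  have g3: "M^4 * (mu a b 0 * M - S) > 0" using MS p4 by (intro mult_pos_pos) auto
  have "P5 a b M > 0" using g1 g2 g3 by linarith
  then show ?thesis using Mc by blast
qed

theorem theorem3:
  fixes a b :: "nat \<Rightarrow> real"
  assumes "\<forall>i\<le>4. a i > 0" and "\<forall>i\<le>4. b i > 0"
    and "QQ a b < 0" and "z0 a b > 0" and "xi_min a b > 0"
    and "P5 a b (xi_min a b) > 0" and "P5 a b (xi_max a b) < 0"
  shows "N_fix_pos a b \<ge> 3"
proof -
  note A = assms(1) and B = assms(2)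
  let ?m = "xi_min a b" and ?M = "xi_max a b"
  have m0: "mu a b 0 > 0" using A unfolding mu_def by simp
  have P0: "P5 a b 0 < 0" using B unfolding P5_def mu_def by simp
  have mM: "?m \<le> ?M" unfolding xi_min_def xi_max_def
    by (rule order_trans[OF Min_le Max_ge[of _ "xi_ext a b 1"]]) auto
  have mM': "?m < ?M" using mM assms(6,7) by (cases "?m = ?M") auto
  obtain r1 where r1: "0 \<le> r1" "r1 \<le> ?m" "P5 a b r1 = 0"
    using IVT[of "P5 a b" 0 0 ?m] P0 assms(5,6) P5_cont by fastforce
  obtain r2 where r2: "?m \<le> r2" "r2 \<le> ?M" "P5 a b r2 = 0"
    using IVT2[of "P5 a b" ?M 0 ?m] mM assms(6,7) P5_cont by fastforce
  obtain K where K: "K > ?M" "P5 a b K > 0" using P5_large[OF m0] by blast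
  obtain r3 where r3: "?M \<le> r3" "r3 \<le> K" "P5 a b r3 = 0"
    using IVT[of "P5 a b" ?M 0 K] K assms(7) P5_cont by fastforce
  have r1': "0 < r1" "r1 < ?m" using r1 P0 assms(6) by (auto simp: order_le_less)
  have r2': "?m < r2" "r2 < ?M" using r2 assms(6,7) by (auto simp: order_le_less)
  have r3': "?M < r3" using r3 assms(7) by (auto simp: order_le_less)
  obtain x1 where x1: "x1 > 0" "(x1, r1 * x1) \<in> fixed_points_pos a b"
    using fix_from_root[OF A r1(3)] r1' by blast
  obtain x2 where x2: "x2 > 0" "(x2, r2 * x2) \<in> fixed_points_pos a b"
    using fix_from_root[OF A r2(3)] r2' assms(5) by auto
  obtain x3 where x3: "x3 > 0" "(x3, r3 * x3) \<in> fixed_points_pos a b"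
    using fix_from_root[OF A r3(3)] r3' r2' assms(5) by auto
  have d12: "(x1, r1 * x1) \<noteq> (x2, r2 * x2)" using r1' r2' x1 by auto
  have d13: "(x1, r1 * x1) \<noteq> (x3, r3 * x3)" using r1' r2' r3' x1 by auto
  have d23: "(x2, r2 * x2) \<noteq> (x3, r3 * x3)" using r2' r3' x2 by auto
  let ?T = "{(x1, r1 * x1), (x2, r2 * x2), (x3, r3 * x3)}"
  have sub: "?T \<subseteq> fixed_points_pos a b" using x1 x2 x3 by auto
  have cT: "card ?T = 3" using d12 d13 d23 by simp
  show ?thesis
  proof (cases "finite (fixed_points_pos a b)")
    case True
    have "card ?T \<le> card (fixed_points_pos a b)" by (rule card_mono[OF True sub])
    then show ?thesis using True cT unfolding N_fix_pos_def by (simp add: numeral_eq_enat)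
  next
    case False
    then show ?thesis unfolding N_fix_pos_def by simp
  qed
qed

end
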